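(* Let $(\mathbf a_1,\mathbf a_2,\mathbf a_3)$ be a nondegenerate m-triangle, and let $\mathbf t_i$ be the torque with respect to the center of mass $O$ of the Newtonian gravitational forces acting at $P_i$, i.e. $\mathbf t_i=\mathbf a_i\times\sum_{j\ne i}\frac{m_im_j}{r_{ij}^3}(\mathbf a_j-\mathbf a_i)$. Then, for $i$ mod $3$, $$\mathbf t_i=\dot{\mathbf\Omega}_i=2m_1m_2m_3\Delta\Big(\frac1{r_{i,i+1}^3}-\frac1{r_{i,i+2}^3}\Big)\mathbf n,$$ where $\mathbf n$ is the unit normal vector such that $(\mathbf a_1,\mathbf a_2,\mathbf n)$ is right-handed.
   Context: Masses $m_1,m_2,m_3>0$ with $m_1+m_2+m_3=1$; position vectors $\mathbf a_i=\overrightarrow{OP_i}$ with $\sum m_i\mathbf a_i=0$; $r_{ij}=|\mathbf a_i-\mathbf a_j|$; $\Delta$ is the area of the triangle $P_1P_2P_3$; $\mathbf\Omega_i=m_i\mathbf a_i\times\dot{\mathbf a}_i$ is the individual angular momentum, whose derivative along a motion satisfying Newton's equations $m_i\ddot{\mathbf a}_i=\sum_{j\neq i}\frac{m_im_j}{r_{ij}^3}(\mathbf a_j-\mathbf a_i)$ equals $\mathbf t_i$. *)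

theory Defs
  imports "HOL-Analysis.Analysis"
begin

text \<open>Bodies are indexed by 0,1,2 (paper's P_1,P_2,P_3); indices are taken mod 3.
  Configuration a :: nat => real^3 (only a 0, a 1, a 2 matter), masses m :: nat => real.\<close>

definition rdist :: "(nat \<Rightarrow> real^3) \<Rightarrow> nat \<Rightarrow> nat \<Rightarrow> real" where
  "rdist a i j = norm (a i - a j)"

definition grav_force :: "(nat \<Rightarrow> real) \<Rightarrow> (nat \<Rightarrow> real^3) \<Rightarrow> nat \<Rightarrow> real^3" where
  "grav_force m a i = (\<Sum>j\<in>{0..2} - {i}. (m i * m j / (rdist a i j) ^ 3) *\<^sub>R (a j - a i))"

definition torque :: "(nat \<Rightarrow> real) \<Rightarrow> (nat \<Rightarrow> real^3) \<Rightarrow> nat \<Rightarrow> real^3" where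
  "torque m a i = cross3 (a i) (grav_force m a i)"

definition tri_area :: "(nat \<Rightarrow> real^3) \<Rightarrow> real" where
  "tri_area a = norm (cross3 (a 1 - a 0) (a 2 - a 0)) / 2"

definition nondeg_m_triangle :: "(nat \<Rightarrow> real) \<Rightarrow> (nat \<Rightarrow> real^3) \<Rightarrow> bool" where
  "nondeg_m_triangle m a \<longleftrightarrow>
     (\<forall>i\<in>{0..2}. m i > 0) \<and> m 0 + m 1 + m 2 = 1 \<and>
     (\<Sum>i\<in>{0..2}. m i *\<^sub>R a i) = 0 \<and>
     cross3 (a 1 - a 0) (a 2 - a 0) \<noteq> 0"

end

theory Submission
  imports Defs
begin

lemma triple: "cross3 (cross3 x y) z = (x \<bullet> z) *\<^sub>R y - (y \<bullet> z) *\<^sub>R x"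
  unfolding vec_eq_iff by (simp add: cross3_def inner_vec_def sum_3 forall_3 algebra_simps)
lemma triple2: "cross3 z (cross3 x y) = (z \<bullet> y) *\<^sub>R x - (z \<bullet> x) *\<^sub>R y"
  unfolding vec_eq_iff by (simp add: cross3_def inner_vec_def sum_3 forall_3 algebra_simps)
lemma sets3: "{0..2::nat} - {0} = {1,2}" "{0..2::nat} - {1} = {0,2}" "{0..2::nat} - {2} = {0,1}" "{0..2::nat} = {0,1,2}"
  by auto
lemma cdr: "cross3 x (y - z) = cross3 x y - cross3 x z" and cdl: "cross3 (y - z) x = cross3 y x - cross3 z x"
  and cnr: "cross3 x (- y) = - cross3 x y" and cnl: "cross3 (- y) x = - cross3 y x"
  unfolding vec_eq_iff by (simp_all add: cross3_def algebra_simps forall_3)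
lemma bb: "bounded_bilinear cross3"
  using bilinear_conv_bounded_bilinear bilinear_cross by blast

lemma part1:
  fixes m :: "nat \<Rightarrow> real" and a :: "nat \<Rightarrow> real^3" and n :: "real^3" and i :: nat
  assumes tri: "nondeg_m_triangle m a"
    and i: "i \<in> {0..2}"
    and n_unit: "norm n = 1"
    and n_normal: "n \<bullet> a 0 = 0" "n \<bullet> a 1 = 0"
    and n_right: "cross3 (a 0) (a 1) \<bullet> n > 0"
  shows "torque m a i =
           (2 * m 0 * m 1 * m 2 * tri_area a *
             (1 / (rdist a i ((i + 1) mod 3)) ^ 3 - 1 / (rdist a i ((i + 2) mod 3)) ^ 3)) *\<^sub>R n"
proof -
  define w where "w = cross3 (a 0) (a 1)"
  have m0: "m 0 > 0" and m1: "m 1 > 0" and m2: "m 2 > 0" and msum: "m 0 + m 1 + m 2 = 1"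
    and com: "m 0 *\<^sub>R a 0 + m 1 *\<^sub>R a 1 + m 2 *\<^sub>R a 2 = 0"
    using tri unfolding nondeg_m_triangle_def by (auto simp: sets3 add.assoc)
  have wn: "w \<bullet> n > 0" using n_right w_def by simp
  have wnz: "w \<noteq> 0" using wn by auto
  have "cross3 w n = 0" unfolding w_def triple using n_normal by (simp add: inner_commute)
  then have "cross3 w (cross3 w n) = 0" by simp
  then have "(w \<bullet> n) *\<^sub>R w = (w \<bullet> w) *\<^sub>R n" unfolding triple2 by simp
  then have eqw: "(w \<bullet> w) *\<^sub>R n = (w \<bullet> n) *\<^sub>R w" by simp
  have "n = (1 / (w \<bullet> w)) *\<^sub>R ((w \<bullet> w) *\<^sub>R n)" using wnz by simp
  also have "\<dots> = (1 / (w \<bullet> w)) *\<^sub>R ((w \<bullet> n) *\<^sub>R w)" by (simp only: eqw)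
  finally have nn: "n = ((w \<bullet> n) / (w \<bullet> w)) *\<^sub>R w" by simp
  have ww: "w \<bullet> w = (norm w)^2" by (simp add: power2_norm_eq_inner)
  have nwpos: "norm w > 0" using wnz by simp
  have "1 = norm n" using n_unit by simp
  also have "\<dots> = (w \<bullet> n) / (norm w)^2 * norm w" using wn nwpos
    by (subst nn) (simp add: ww)
  finally have "w \<bullet> n = norm w" using nwpos by (simp add: power2_eq_square field_simps)
  then have nn2: "w = norm w *\<^sub>R n" using nn nwpos ww
    by (simp add: power2_eq_square)
  have a2: "a 2 = (- m 0 / m 2) *\<^sub>R a 0 + (- m 1 / m 2) *\<^sub>R a 1"
  proof -
    have "m 2 *\<^sub>R a 2 = - (m 0 *\<^sub>R a 0 + m 1 *\<^sub>R a 1)" using com by (simp add: algebra_simps eq_neg_iff_add_eq_0)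
    then have "(1 / m 2) *\<^sub>R (m 2 *\<^sub>R a 2) = (1 / m 2) *\<^sub>R (- (m 0 *\<^sub>R a 0 + m 1 *\<^sub>R a 1))" by simp
    then show ?thesis using m2 by (simp add: scaleR_add_right scaleR_diff_right)
  qed
  have c12: "cross3 (a 1) (a 2) = (m 0 / m 2) *\<^sub>R w"
    unfolding a2 w_def by (simp add: cross_add_right cross_mult_right cdr cnr cdl cnl cross_skew[of "a 1" "a 0"] cross_skew[of "a (Suc 0)" "a 0"])
  have c20: "cross3 (a 2) (a 0) = (m 1 / m 2) *\<^sub>R w"
    unfolding a2 w_def by (simp add: cross_add_left cross_mult_left cdr cnr cdl cnl cross_skew[of "a 1" "a 0"] cross_skew[of "a (Suc 0)" "a 0"])
  have "cross3 (a 1 - a 0) (a 2 - a 0) = cross3 (a 1) (a 2) + cross3 (a 2) (a 0) + w"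
    unfolding w_def by (simp add: cdl cdr cross_skew[of "a 0" "a 2"] cross_skew[of "a 0" "a (Suc (Suc 0))"] cross_skew[of "a 1" "a 0"] cross_skew[of "a (Suc 0)" "a 0"] algebra_simps)
  also have "\<dots> = (m 0 / m 2 + m 1 / m 2 + 1) *\<^sub>R w" unfolding c12 c20
    by (simp only: scaleR_add_left scaleR_one)
  also have "m 0 / m 2 + m 1 / m 2 + 1 = 1 / m 2" using m2 msum by (simp add: field_simps)
  finally have ta: "tri_area a = norm w / (2 * m 2)" unfolding tri_area_def using m2 by simp
  define K where "K = 2 * m 0 * m 1 * m 2 * tri_area a"
  have K: "K = m 0 * m 1 * norm w" unfolding K_def ta using m2 by simp
  have A: "(m 0 * m 1) *\<^sub>R cross3 (a 0) (a 1) = K *\<^sub>R n"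
    unfolding K w_def[symmetric] by (subst nn2) simp
  have B: "(m 1 * m 2) *\<^sub>R cross3 (a 1) (a 2) = K *\<^sub>R n"
    unfolding K c12 using m2 by (subst nn2) simp
  have C: "(m 2 * m 0) *\<^sub>R cross3 (a 2) (a 0) = K *\<^sub>R n"
    unfolding K c20 using m2 by (subst nn2) simp
  have sym: "rdist a x y = rdist a y x" for x y unfolding rdist_def by (simp add: norm_minus_commute)
  have gen: "cross3 (a p) ((m p * m q / r) *\<^sub>R (a q - a p)) = (1 / r) *\<^sub>R ((m p * m q) *\<^sub>R cross3 (a p) (a q))" for p q r
    by (simp add: cross_mult_right cdr)
  have gen2: "cross3 (a p) ((m p * m q / r) *\<^sub>R (a q - a p)) = - (1 / r) *\<^sub>R ((m q * m p) *\<^sub>R cross3 (a q) (a p))" for p q r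
    by (simp add: cross_mult_right cdr cross_skew[of "a q" "a p"] mult.commute)
  consider "i = 0" | "i = 1" | "i = 2" using i by fastforce
  then show ?thesis
  proof cases
    case 1
    have "torque m a 0 = cross3 (a 0) ((m 0 * m 1 / rdist a 0 1 ^ 3) *\<^sub>R (a 1 - a 0))
        + cross3 (a 0) ((m 0 * m 2 / rdist a 0 2 ^ 3) *\<^sub>R (a 2 - a 0))"
      unfolding torque_def grav_force_def sets3(1-3) by (simp add: cross_add_right)
    also have "\<dots> = (1 / rdist a 0 1 ^ 3) *\<^sub>R (K *\<^sub>R n) - (1 / rdist a 0 2 ^ 3) *\<^sub>R (K *\<^sub>R n)"
      unfolding gen[of 0 1] gen2[of 0 2] A C by simp
    finally have T: "torque m a 0 = (1 / rdist a 0 1 ^ 3) *\<^sub>R (K *\<^sub>R n) - (1 / rdist a 0 2 ^ 3) *\<^sub>R (K *\<^sub>R n)" .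
    have e: "((0::nat) + 1) mod 3 = 1" "((0::nat) + 2) mod 3 = 2" by simp_all
    show ?thesis unfolding 1 e K_def[symmetric] T by (simp add: algebra_simps)
  next
    case 2
    have "torque m a 1 = cross3 (a 1) ((m 1 * m 0 / rdist a 1 0 ^ 3) *\<^sub>R (a 0 - a 1))
        + cross3 (a 1) ((m 1 * m 2 / rdist a 1 2 ^ 3) *\<^sub>R (a 2 - a 1))"
      unfolding torque_def grav_force_def sets3(1-3) by (simp add: cross_add_right)
    also have "\<dots> = (1 / rdist a 1 2 ^ 3) *\<^sub>R (K *\<^sub>R n) - (1 / rdist a 1 0 ^ 3) *\<^sub>R (K *\<^sub>R n)"
      unfolding gen[of 1 2] gen2[of 1 0] A B by simp
    finally have T: "torque m a 1 = (1 / rdist a 1 2 ^ 3) *\<^sub>R (K *\<^sub>R n) - (1 / rdist a 1 0 ^ 3) *\<^sub>R (K *\<^sub>R n)" .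
    have e: "((1::nat) + 1) mod 3 = 2" "((1::nat) + 2) mod 3 = 0" by simp_all
    show ?thesis unfolding 2 e K_def[symmetric] T by (simp add: algebra_simps)
  next
    case 3
    have "torque m a 2 = cross3 (a 2) ((m 2 * m 0 / rdist a 2 0 ^ 3) *\<^sub>R (a 0 - a 2))
        + cross3 (a 2) ((m 2 * m 1 / rdist a 2 1 ^ 3) *\<^sub>R (a 1 - a 2))"
      unfolding torque_def grav_force_def sets3(1-3) by (simp add: cross_add_right)
    also have "\<dots> = (1 / rdist a 2 0 ^ 3) *\<^sub>R (K *\<^sub>R n) - (1 / rdist a 2 1 ^ 3) *\<^sub>R (K *\<^sub>R n)"
      unfolding gen[of 2 0] gen2[of 2 1] C B by simp
    finally have T: "torque m a 2 = (1 / rdist a 2 0 ^ 3) *\<^sub>R (K *\<^sub>R n) - (1 / rdist a 2 1 ^ 3) *\<^sub>R (K *\<^sub>R n)" .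
    have e: "((2::nat) + 1) mod 3 = 0" "((2::nat) + 2) mod 3 = 1" by simp_all
    show ?thesis unfolding 3 e K_def[symmetric] T by (simp add: algebra_simps)
  qed
qed

theorem mainTheorem10:
  fixes m :: "nat \<Rightarrow> real" and a :: "nat \<Rightarrow> real^3" and n :: "real^3" and i :: nat
  assumes tri: "nondeg_m_triangle m a"
    and i: "i \<in> {0..2}"
    and n_unit: "norm n = 1"
    and n_normal: "n \<bullet> a 0 = 0" "n \<bullet> a 1 = 0"
    and n_right: "cross3 (a 0) (a 1) \<bullet> n > 0"
  shows "torque m a i =
           (2 * m 0 * m 1 * m 2 * tri_area a *
             (1 / (rdist a i ((i + 1) mod 3)) ^ 3 - 1 / (rdist a i ((i + 2) mod 3)) ^ 3)) *\<^sub>R n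
       \<and> (\<forall>(X :: real \<Rightarrow> nat \<Rightarrow> real^3) V S \<tau>.
            open S \<and> \<tau> \<in> S \<and> X \<tau> = a \<and>
            (\<forall>t\<in>S. \<forall>k\<in>{0..2}. ((\<lambda>s. X s k) has_vector_derivative V t k) (at t)) \<and>
            (\<forall>t\<in>S. \<forall>k\<in>{0..2}. ((\<lambda>s. V s k) has_vector_derivative
                 (1 / m k) *\<^sub>R grav_force m (X t) k) (at t))
            \<longrightarrow> ((\<lambda>s. m i *\<^sub>R cross3 (X s i) (V s i)) has_vector_derivative torque m a i) (at \<tau>))"
proof (intro conjI allI impI)
  show "torque m a i =
           (2 * m 0 * m 1 * m 2 * tri_area a *
             (1 / (rdist a i ((i + 1) mod 3)) ^ 3 - 1 / (rdist a i ((i + 2) mod 3)) ^ 3)) *\<^sub>R n"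
    by (rule part1[OF assms])
next
  fix X :: "real \<Rightarrow> nat \<Rightarrow> real^3" and V S \<tau>
  assume h: "open S \<and> \<tau> \<in> S \<and> X \<tau> = a \<and>
            (\<forall>t\<in>S. \<forall>k\<in>{0..2}. ((\<lambda>s. X s k) has_vector_derivative V t k) (at t)) \<and>
            (\<forall>t\<in>S. \<forall>k\<in>{0..2}. ((\<lambda>s. V s k) has_vector_derivative
                 (1 / m k) *\<^sub>R grav_force m (X t) k) (at t))"
  have mi: "m i > 0" using tri i unfolding nondeg_m_triangle_def by auto
  have d1: "((\<lambda>s. X s i) has_vector_derivative V \<tau> i) (at \<tau>)" using h i by blast
  have d2: "((\<lambda>s. V s i) has_vector_derivative (1 / m i) *\<^sub>R grav_force m a i) (at \<tau>)" using h i by metis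
  have "((\<lambda>s. cross3 (X s i) (V s i)) has_vector_derivative
      cross3 (X \<tau> i) ((1 / m i) *\<^sub>R grav_force m a i) + cross3 (V \<tau> i) (V \<tau> i)) (at \<tau>)"
    by (rule bounded_bilinear.has_vector_derivative[OF bb d1 d2])
  then have "((\<lambda>s. m i *\<^sub>R cross3 (X s i) (V s i)) has_vector_derivative
      m i *\<^sub>R (cross3 (X \<tau> i) ((1 / m i) *\<^sub>R grav_force m a i) + cross3 (V \<tau> i) (V \<tau> i))) (at \<tau>)"
    by (rule bounded_linear.has_vector_derivative[OF bounded_linear_scaleR_right])
  moreover have "m i *\<^sub>R (cross3 (X \<tau> i) ((1 / m i) *\<^sub>R grav_force m a i) + cross3 (V \<tau> i) (V \<tau> i)) = torque m a i"
    using h mi by (simp add: torque_def cross_mult_right)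
  ultimately show "((\<lambda>s. m i *\<^sub>R cross3 (X s i) (V s i)) has_vector_derivative torque m a i) (at \<tau>)" by simp
qed

end
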